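(* Let $l\in\mathbb{N}$ and let $G^1,\dots,G^l$ be compatible nontrivial monotonic hypergraph sequences. For $n\in\mathbb{N}$ let $V_n:=V(G^1_n)$, and for $k\in\mathbb{N}$ let $Q^k_n:=(V_n,\binom{V_n}{k})$ and $Q^k=(Q^k_n)_{n\in\mathbb{N}}$. For $x\in\mathbb{R}$ let $M(x)\in\mathbb{N}\cup\{+\infty\}$ be the infimum of all $n\in\mathbb{N}$ with $|V_n|>x$. Then for every real $s>1$ and every $m\in\mathbb{N}_0$, $$\mathrm{vdW}_{l+m}(G^1,\dots,G^l,\underbrace{Q^2,\dots,Q^2}_{m})=\mathrm{vdW}_{l+1}(G^1,\dots,G^l,Q^{m+1})\le\max\Big(M(s\cdot m),\ \mathrm{cr}\big((G^1,\dots,G^l),1-\tfrac1s\big)\Big).$$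
   Context: A finite hypergraph $G=(V,E)$ has finite vertex set $V$ and $E\subseteq\mathcal P(V)$; $\binom{V}{k}$ is the set of $k$-element subsets of $V$. A sequence $(G_n)_{n\in\mathbb{N}}$ of finite hypergraphs is nontrivial monotonic if $V(G_n)\subseteq V(G_{n+1})$, $E(G_n)\subseteq E(G_{n+1})$, $V(G_1)\ne\emptyset$ and $\emptyset\notin E(G_n)$ for all $n$. Sequences $H^1,\dots,H^r$ are compatible if $V(H^1_n)=\dots=V(H^r_n)$ for all $n$. For compatible nontrivial monotonic sequences $H^1,\dots,H^r$, $\mathrm{vdW}_r(H^1,\dots,H^r)\in\mathbb{N}\cup\{+\infty\}$ is the infimum of all $n\in\mathbb{N}$ such that for every map $f:V(H^1_n)\to\{1,\dots,r\}$ there is some $i\in\{1,\dots,r\}$ and some hyperedge of $H^i_n$ all of whose vertices get colour $i$. A set is independent in a hypergraph if it contains no hyperedge. For $q\in\mathbb{R}_{>0}$, $\mathrm{cr}((H^1,\dots,H^r),q)\in\mathbb{N}\cup\{+\infty\}$ is the infimum of all $n\in\mathbb{N}$ such that for all $n'\ge n$ and all $r$-tuples $(S_1,\dots,S_r)$ of pairwise disjoint sets with $S_i$ independent in $H^i_{n'}$ we have $\frac{|S_1|+\dots+|S_r|}{|V(H^1_{n'})|}<q$. Infima of empty sets are $+\infty$. *)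

theory Defs
  imports Main "HOL-Library.Extended_Nat" Complex_Main
begin

text \<open>A finite hypergraph is a pair (V, E) with V finite and E a set of subsets of V.
  Sequences are indexed by nat; only indices n \<ge> 1 (the paper's \<nat>) matter.\<close>

type_synonym 'a hgraph = "'a set \<times> 'a set set"
type_synonym 'a hseq = "nat \<Rightarrow> 'a hgraph"

definition hypergraph :: "'a hgraph \<Rightarrow> bool" where
  "hypergraph G \<longleftrightarrow> finite (fst G) \<and> snd G \<subseteq> Pow (fst G)"

definition nontrivial_monotonic :: "'a hseq \<Rightarrow> bool" where
  "nontrivial_monotonic H \<longleftrightarrow>
     (\<forall>n\<ge>1. hypergraph (H n)
        \<and> fst (H n) \<subseteq> fst (H (Suc n))
        \<and> snd (H n) \<subseteq> snd (H (Suc n))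
        \<and> {} \<notin> snd (H n))
     \<and> fst (H 1) \<noteq> {}"

definition compatible :: "'a hseq list \<Rightarrow> bool" where
  "compatible Hs \<longleftrightarrow> (\<forall>n\<ge>1. \<forall>i<length Hs. \<forall>j<length Hs. fst ((Hs!i) n) = fst ((Hs!j) n))"

text \<open>van der Waerden-type number; colours are 0,...,r-1 instead of 1,...,r.\<close>
definition vdW :: "'a hseq list \<Rightarrow> enat" where
  "vdW Hs = Inf {enat n | n. n \<ge> 1 \<and>
      (\<forall>f :: 'a \<Rightarrow> nat. f ` fst ((Hs!0) n) \<subseteq> {..<length Hs} \<longrightarrow>
         (\<exists>i<length Hs. \<exists>e\<in>snd ((Hs!i) n). \<forall>v\<in>e. f v = i))}"

definition independent :: "'a hgraph \<Rightarrow> 'a set \<Rightarrow> bool" where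
  "independent G S \<longleftrightarrow> (\<forall>e\<in>snd G. \<not> e \<subseteq> S)"

definition cr :: "'a hseq list \<Rightarrow> real \<Rightarrow> enat" where
  "cr Hs q = Inf {enat n | n. n \<ge> 1 \<and>
      (\<forall>n'\<ge>n. \<forall>S :: nat \<Rightarrow> 'a set.
         (\<forall>i<length Hs. S i \<subseteq> fst ((Hs!i) n') \<and> independent ((Hs!i) n') (S i))
         \<and> (\<forall>i<length Hs. \<forall>j<length Hs. i \<noteq> j \<longrightarrow> S i \<inter> S j = {})
         \<longrightarrow> real (\<Sum>i<length Hs. card (S i)) / real (card (fst ((Hs!0) n'))) < q)}"

definition Qseq :: "(nat \<Rightarrow> 'a set) \<Rightarrow> nat \<Rightarrow> 'a hseq" where
  "Qseq V k = (\<lambda>n. (V n, {e. e \<subseteq> V n \<and> card e = k}))"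

definition Mfun :: "(nat \<Rightarrow> 'a set) \<Rightarrow> real \<Rightarrow> enat" where
  "Mfun V x = Inf {enat n | n. n \<ge> 1 \<and> real (card (V n)) > x}"

end

theory Submission
  imports Defs
begin

lemma nth_rep_app:
  assumes "i < length Gs + m"
  shows "(Gs @ replicate m Q) ! i = (if i < length Gs then Gs ! i else Q)"
  using assms by (auto simp: nth_append)

lemma AtoB:
  fixes Gs :: "'a hseq list" and W :: "nat \<Rightarrow> 'a set"
  assumes l: "length Gs \<ge> 1"
    and V0: "fst ((Gs!0) n) = V" and Wn: "W n = V"
    and edges: "\<forall>i<length Gs. \<forall>e\<in>snd((Gs!i) n). e \<subseteq> V"
    and fin: "finite V"
    and PA: "\<forall>f::'a\<Rightarrow>nat. f ` V \<subseteq> {..<length Gs + m} \<longrightarrow>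
        (\<exists>i<length Gs + m. \<exists>e\<in>snd(((Gs @ replicate m (Qseq W 2))!i) n). \<forall>v\<in>e. f v = i)"
    and f: "f ` V \<subseteq> {..<length Gs + 1}"
  shows "\<exists>i<length Gs + 1. \<exists>e\<in>snd(((Gs @ [Qseq W (m+1)])!i) n). \<forall>v\<in>e. f v = i"
proof (rule ccontr)
  assume neg: "\<not> ?thesis"
  let ?l = "length Gs"
  define C where "C = {v\<in>V. f v = ?l}"
  have finC: "finite C" using fin C_def by auto
  have cC: "card C \<le> m"
  proof (rule ccontr)
    assume "\<not> card C \<le> m"
    then obtain e where e: "e \<subseteq> C" "card e = m+1"
      using obtain_subset_with_card_n[of "m+1" C] by force
    have "e \<in> snd (((Gs @ [Qseq W (m+1)])!?l) n)"
      using e Wn C_def by (auto simp: Qseq_def nth_append)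
    moreover have "\<forall>v\<in>e. f v = ?l" using e C_def by auto
    moreover have "?l < ?l + 1" by simp
    ultimately show False using neg by blast
  qed
  obtain g where g: "g ` C \<subseteq> {..<m}" "inj_on g C"
    using card_le_inj[OF finC, of "{..<m}"] cC by auto
  define f' where "f' = (\<lambda>v. if f v = ?l then ?l + g v else f v)"
  have "f' ` V \<subseteq> {..<?l + m}"
  proof
    fix x assume "x \<in> f' ` V"
    then obtain v where v: "v \<in> V" "x = f' v" by auto
    show "x \<in> {..<?l + m}"
    proof (cases "f v = ?l")
      case True
      then have "v \<in> C" using v C_def by auto
      then show ?thesis using g True v f'_def by auto
    next
      case False
      have "f v < ?l + 1" using f v by auto
      then show ?thesis using False v f'_def by auto
    qed
  qed
  then obtain i e where i: "i < ?l + m" and e: "e \<in> snd(((Gs @ replicate m (Qseq W 2))!i) n)"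
      and mono: "\<forall>v\<in>e. f' v = i"
    using PA by blast
  show False
  proof (cases "i < ?l")
    case True
    have e': "e \<in> snd ((Gs!i) n)" using e True by (simp add: nth_append)
    have "e \<subseteq> V" using edges True e' by auto
    have "\<forall>v\<in>e. f v = i"
    proof
      fix v assume "v \<in> e"
      then have "f' v = i" using mono by auto
      then show "f v = i" using True f'_def by (auto split: if_splits)
    qed
    moreover have "i < ?l + 1" using True by simp
    moreover have "e \<in> snd(((Gs @ [Qseq W (m+1)])!i) n)" using e' True by (simp add: nth_append)
    ultimately show False using neg by blast
  next
    case False
    have "e \<in> snd (Qseq W 2 n)" using e False i by (simp add: nth_append)
    then have eV: "e \<subseteq> V" and c2: "card e = 2" using Wn by (auto simp: Qseq_def)
    obtain a b where ab: "a \<in> e" "b \<in> e" "a \<noteq> b"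
      using c2 by (metis card_2_iff insertI1 insertI2)
    have "\<And>v. v \<in> e \<Longrightarrow> v \<in> C \<and> g v = i - ?l"
    proof -
      fix v assume v: "v \<in> e"
      have fv: "f v < ?l + 1" using f eV v by auto
      have "f' v = i" using mono v by auto
      then have "f v = ?l" using False fv f'_def by (auto split: if_splits)
      then show "v \<in> C \<and> g v = i - ?l" using \<open>f' v = i\<close> f'_def C_def eV v by auto
    qed
    then have "a = b" using ab g(2) by (metis inj_onD)
    then show False using ab by simp
  qed
qed

lemma BtoA:
  fixes Gs :: "'a hseq list" and W :: "nat \<Rightarrow> 'a set"
  assumes l: "length Gs \<ge> 1"
    and Wn: "W n = V"
    and edges: "\<forall>i<length Gs. \<forall>e\<in>snd((Gs!i) n). e \<subseteq> V"
    and fin: "finite V"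
    and PB: "\<forall>f::'a\<Rightarrow>nat. f ` V \<subseteq> {..<length Gs + 1} \<longrightarrow>
       (\<exists>i<length Gs + 1. \<exists>e\<in>snd(((Gs @ [Qseq W (m+1)])!i) n). \<forall>v\<in>e. f v = i)"
    and f: "f ` V \<subseteq> {..<length Gs + m}"
  shows "\<exists>i<length Gs + m. \<exists>e\<in>snd(((Gs @ replicate m (Qseq W 2))!i) n). \<forall>v\<in>e. f v = i"
proof (rule ccontr)
  assume neg: "\<not> ?thesis"
  let ?l = "length Gs"
  define f' where "f' = (\<lambda>v. if f v \<ge> ?l then ?l else f v)"
  have "f' ` V \<subseteq> {..<?l + 1}" unfolding f'_def by auto
  then obtain i e where i: "i < ?l + 1" and e: "e \<in> snd(((Gs @ [Qseq W (m+1)])!i) n)"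
      and mono: "\<forall>v\<in>e. f' v = i"
    using PB by blast
  show False
  proof (cases "i < ?l")
    case True
    have e': "e \<in> snd ((Gs!i) n)" using e True by (simp add: nth_append)
    have "\<forall>v\<in>e. f v = i"
    proof
      fix v assume "v \<in> e"
      then have "f' v = i" using mono by auto
      then show "f v = i" using True f'_def by (auto split: if_splits)
    qed
    moreover have "i < ?l + m" using True by simp
    moreover have "e \<in> snd(((Gs @ replicate m (Qseq W 2))!i) n)" using e' True by (simp add: nth_append)
    ultimately show False using neg by blast
  next
    case False
    then have il: "i = ?l" using i by auto
    have "e \<in> snd (Qseq W (m+1) n)" using e il by (simp add: nth_append)
    then have eV: "e \<subseteq> V" and cm: "card e = m+1" using Wn by (auto simp: Qseq_def)
    have fe: "f ` e \<subseteq> {?l..<?l+m}"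
    proof
      fix x assume "x \<in> f ` e"
      then obtain v where v: "v \<in> e" "x = f v" by auto
      have "f v < ?l + m" using f eV v by auto
      moreover have "f v \<ge> ?l" using mono v il f'_def by (auto split: if_splits)
      ultimately show "x \<in> {?l..<?l+m}" using v by auto
    qed
    have "\<not> inj_on f e"
    proof
      assume "inj_on f e"
      then have "card e \<le> card {?l..<?l+m}" using card_inj_on_le[OF _ fe] by auto
      then show False using cm by simp
    qed
    then obtain a b where ab: "a \<in> e" "b \<in> e" "a \<noteq> b" "f a = f b"
      unfolding inj_on_def by blast
    define j where "j = f a"
    have j: "?l \<le> j" "j < ?l + m" using fe ab j_def by auto
    have "{a,b} \<in> snd(((Gs @ replicate m (Qseq W 2))!j) n)"
      using j ab eV Wn by (auto simp: nth_append Qseq_def)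
    moreover have "\<forall>v\<in>{a,b}. f v = j" using ab j_def by auto
    ultimately show False using neg j by blast
  qed
qed



lemma UB:
  fixes Gs :: "'a hseq list" and W :: "nat \<Rightarrow> 'a set" and s :: real
  assumes l: "length Gs \<ge> 1"
    and V0: "fst ((Gs!0) n) = V" and Wn: "W n = V"
    and vert: "\<forall>i<length Gs. fst ((Gs!i) n) = V"
    and fin: "finite V"
    and big: "real (card V) > s * real m" and s: "s > 1"
    and crc: "\<forall>S :: nat \<Rightarrow> 'a set.
         (\<forall>i<length Gs. S i \<subseteq> fst ((Gs!i) n) \<and> independent ((Gs!i) n) (S i))
         \<and> (\<forall>i<length Gs. \<forall>j<length Gs. i \<noteq> j \<longrightarrow> S i \<inter> S j = {})
         \<longrightarrow> real (\<Sum>i<length Gs. card (S i)) / real (card (fst ((Gs!0) n))) < 1 - 1/s"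
    and f: "f ` V \<subseteq> {..<length Gs + 1}"
  shows "\<exists>i<length Gs + 1. \<exists>e\<in>snd(((Gs @ [Qseq W (m+1)])!i) n). \<forall>v\<in>e. f v = i"
proof (rule ccontr)
  assume neg: "\<not> ?thesis"
  let ?l = "length Gs"
  define S where "S = (\<lambda>i. {v\<in>V. f v = i})"
  have noG: "\<forall>i<?l. \<forall>e\<in>snd((Gs!i) n). \<not> (\<forall>v\<in>e. f v = i)"
  proof (intro allI impI ballI)
    fix i e assume i: "i < ?l" and e: "e \<in> snd ((Gs!i) n)"
    have "i < ?l + 1" "e \<in> snd(((Gs @ [Qseq W (m+1)])!i) n)" using i e by (auto simp: nth_append)
    then show "\<not> (\<forall>v\<in>e. f v = i)" using neg by blast
  qed
  have "(\<forall>i<?l. S i \<subseteq> fst ((Gs!i) n) \<and> independent ((Gs!i) n) (S i))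
         \<and> (\<forall>i<?l. \<forall>j<?l. i \<noteq> j \<longrightarrow> S i \<inter> S j = {})"
    using vert noG unfolding S_def independent_def by blast
  then have lt: "real (\<Sum>i<?l. card (S i)) / real (card V) < 1 - 1/s"
    using crc V0 by auto
  have cV: "card V = (\<Sum>i<Suc ?l. card (S i))"
  proof -
    have "V = (\<Union>i<Suc ?l. S i)" using f unfolding S_def by auto
    moreover have "card (\<Union>i<Suc ?l. S i) = (\<Sum>i<Suc ?l. card (S i))"
      by (rule card_UN_disjoint) (use fin in \<open>auto simp: S_def\<close>)
    ultimately show ?thesis by simp
  qed
  have Vpos: "real (card V) > 0"
  proof -
    have "s * real m \<ge> 0" using s by simp
    then show ?thesis using big by linarith
  qed
  have "real (\<Sum>i<?l. card (S i)) < (1 - 1/s) * real (card V)"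
    using lt Vpos by (simp add: divide_less_eq)
  then have "real (card (S ?l)) > real (card V) / s"
  proof -
    have "real (card V) = real (card (S ?l)) + real (\<Sum>i<?l. card (S i))" using cV by simp
    moreover have "(1 - 1/s) * real (card V) = real (card V) - real (card V) / s"
      by (simp add: algebra_simps)
    ultimately show ?thesis using \<open>real (\<Sum>i<?l. card (S i)) < (1 - 1/s) * real (card V)\<close> by linarith
  qed
  moreover have "real (card V) / s > real m" using big s by (simp add: less_divide_eq mult.commute)
  ultimately have "card (S ?l) \<ge> m + 1" by linarith
  then obtain e where e: "e \<subseteq> S ?l" "card e = m+1"
    using obtain_subset_with_card_n[of "m+1" "S ?l"] by force
  have "e \<in> snd(((Gs @ [Qseq W (m+1)])!?l) n)" using e Wn by (auto simp: Qseq_def S_def)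
  moreover have "\<forall>v\<in>e. f v = ?l" using e S_def by auto
  moreover have "?l < ?l + 1" by simp
  ultimately show False using neg by blast
qed


lemma enat_Inf_mem:
  fixes S :: "enat set"
  assumes "Inf S = enat n"
  shows "enat n \<in> S"
proof -
  have "S \<noteq> {}" using assms by (auto simp: Inf_enat_def)
  then have "Inf S = (LEAST x. x \<in> S)" by (simp add: Inf_enat_def)
  moreover have "(LEAST x. x \<in> S) \<in> S" using \<open>S \<noteq> {}\<close> by (metis LeastI ex_in_conv)
  ultimately show ?thesis using assms by simp
qed

lemma Inf_cong_sets:
  assumes "\<And>n. n \<ge> 1 \<Longrightarrow> P n = Q n"
  shows "Inf {enat n | n. n \<ge> 1 \<and> P n} = Inf {enat n | n. n \<ge> 1 \<and> Q n}"
proof -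
  have "{enat n | n. n \<ge> 1 \<and> P n} = {enat n | n. n \<ge> 1 \<and> Q n}" using assms by blast
  then show ?thesis by simp
qed

theorem theorem1:
  fixes Gs :: "'a hseq list" and s :: real and m :: nat
  assumes "length Gs \<ge> 1"
    and "\<forall>G\<in>set Gs. nontrivial_monotonic G"
    and "compatible Gs"
    and "s > 1"
  shows "vdW (Gs @ replicate m (Qseq (\<lambda>n. fst ((Gs!0) n)) 2))
           = vdW (Gs @ [Qseq (\<lambda>n. fst ((Gs!0) n)) (m + 1)])
       \<and> vdW (Gs @ [Qseq (\<lambda>n. fst ((Gs!0) n)) (m + 1)])
           \<le> max (Mfun (\<lambda>n. fst ((Gs!0) n)) (s * real m)) (cr Gs (1 - 1 / s))"
proof -
  let ?l = "length Gs"
  define V where "V = (\<lambda>n. fst ((Gs!0) n))"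
  have V0: "\<And>n. fst ((Gs!0) n) = V n" by (simp add: V_def)
  have nm: "\<And>i. i < ?l \<Longrightarrow> nontrivial_monotonic (Gs!i)" using assms(2) nth_mem by blast
  have C: "\<forall>n\<ge>1. \<forall>i<?l. \<forall>j<?l. fst ((Gs!i) n) = fst ((Gs!j) n)"
    using assms(3) unfolding compatible_def .
  have l0: "0 < ?l" using assms(1) by (cases Gs) auto
  have vert: "\<And>n i. n \<ge> 1 \<Longrightarrow> i < ?l \<Longrightarrow> fst ((Gs!i) n) = V n"
  proof -
    fix n :: nat and i assume a: "n \<ge> 1" "i < ?l"
    have "fst ((Gs!i) n) = fst ((Gs!0) n)" using C a l0 by blast
    then show "fst ((Gs!i) n) = V n" by (simp only: V0)
  qed
  have hg: "\<And>n i. n \<ge> 1 \<Longrightarrow> i < ?l \<Longrightarrow> hypergraph ((Gs!i) n)"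
    using nm unfolding nontrivial_monotonic_def by blast
  have fin: "\<And>n. n \<ge> 1 \<Longrightarrow> finite (V n)"
  proof -
    fix n :: nat assume a: "n \<ge> 1"
    have "hypergraph ((Gs!0) n)" using hg a l0 by blast
    then show "finite (V n)" unfolding hypergraph_def V0 by blast
  qed
  have edges: "\<And>n i e. n \<ge> 1 \<Longrightarrow> i < ?l \<Longrightarrow> e \<in> snd ((Gs!i) n) \<Longrightarrow> e \<subseteq> V n"
  proof -
    fix n :: nat and i e assume a: "n \<ge> 1" "i < ?l" "e \<in> snd ((Gs!i) n)"
    have "hypergraph ((Gs!i) n)" using hg a by blast
    then have "e \<subseteq> fst ((Gs!i) n)" using a(3) unfolding hypergraph_def by blast
    then show "e \<subseteq> V n" using vert a by metis
  qed
  have step: "\<And>n. n \<ge> 1 \<Longrightarrow> V n \<subseteq> V (Suc n)"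
  proof -
    fix n :: nat assume a: "n \<ge> 1"
    have "nontrivial_monotonic (Gs!0)" using nm l0 by blast
    then have "fst ((Gs!0) n) \<subseteq> fst ((Gs!0) (Suc n))" using a unfolding nontrivial_monotonic_def by blast
    then show "V n \<subseteq> V (Suc n)" by (simp only: V0)
  qed
  have monoV: "\<And>a b. 1 \<le> a \<Longrightarrow> a \<le> b \<Longrightarrow> V a \<subseteq> V b"
  proof -
    fix a b :: nat assume a: "1 \<le> a" and ab: "a \<le> b"
    show "V a \<subseteq> V b" using ab
    proof (induction b rule: dec_induct)
      case base then show ?case by simp
    next
      case (step k) then show ?case using \<open>\<And>n. n \<ge> 1 \<Longrightarrow> V n \<subseteq> V (Suc n)\<close>[of k] a by auto
    qed
  qed
  have h0: "\<And>xs. (Gs @ xs)!0 = Gs!0" using assms(1) by (cases Gs) auto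
  have eqn: "\<And>n. n \<ge> 1 \<Longrightarrow>
     (\<forall>f::'a\<Rightarrow>nat. f ` V n \<subseteq> {..<?l+m} \<longrightarrow> (\<exists>i<?l+m. \<exists>e\<in>snd(((Gs @ replicate m (Qseq V 2))!i) n). \<forall>v\<in>e. f v = i))
   = (\<forall>f::'a\<Rightarrow>nat. f ` V n \<subseteq> {..<?l+1} \<longrightarrow> (\<exists>i<?l+1. \<exists>e\<in>snd(((Gs @ [Qseq V (m+1)])!i) n). \<forall>v\<in>e. f v = i))"
  proof -
    fix n :: nat assume n: "n \<ge> 1"
    have E: "\<forall>i<?l. \<forall>e\<in>snd((Gs!i) n). e \<subseteq> V n" using edges n by blast
    show "?thesis n"
    proof (intro iffI allI impI)
      fix f :: "'a \<Rightarrow> nat"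
      assume PA: "\<forall>f::'a\<Rightarrow>nat. f ` V n \<subseteq> {..<?l+m} \<longrightarrow> (\<exists>i<?l+m. \<exists>e\<in>snd(((Gs @ replicate m (Qseq V 2))!i) n). \<forall>v\<in>e. f v = i)"
        and f: "f ` V n \<subseteq> {..<?l+1}"
      show "\<exists>i<?l+1. \<exists>e\<in>snd(((Gs @ [Qseq V (m+1)])!i) n). \<forall>v\<in>e. f v = i"
        by (rule AtoB[OF assms(1) V0 _ E fin[OF n] PA f]) simp
    next
      fix f :: "'a \<Rightarrow> nat"
      assume PB: "\<forall>f::'a\<Rightarrow>nat. f ` V n \<subseteq> {..<?l+1} \<longrightarrow> (\<exists>i<?l+1. \<exists>e\<in>snd(((Gs @ [Qseq V (m+1)])!i) n). \<forall>v\<in>e. f v = i)"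
        and f: "f ` V n \<subseteq> {..<?l+m}"
      show "\<exists>i<?l+m. \<exists>e\<in>snd(((Gs @ replicate m (Qseq V 2))!i) n). \<forall>v\<in>e. f v = i"
        by (rule BtoA[OF assms(1) _ E fin[OF n] PB f]) simp
    qed
  qed
  have eq: "vdW (Gs @ replicate m (Qseq V 2)) = vdW (Gs @ [Qseq V (m+1)])"
    unfolding vdW_def
  proof (rule Inf_cong_sets)
    fix n :: nat assume n: "n \<ge> 1"
    show "(\<forall>f::'a\<Rightarrow>nat. f ` fst (((Gs @ replicate m (Qseq V 2))!0) n) \<subseteq> {..<length (Gs @ replicate m (Qseq V 2))} \<longrightarrow>
         (\<exists>i<length (Gs @ replicate m (Qseq V 2)). \<exists>e\<in>snd (((Gs @ replicate m (Qseq V 2))!i) n). \<forall>v\<in>e. f v = i))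
      = (\<forall>f::'a\<Rightarrow>nat. f ` fst (((Gs @ [Qseq V (m+1)])!0) n) \<subseteq> {..<length (Gs @ [Qseq V (m+1)])} \<longrightarrow>
         (\<exists>i<length (Gs @ [Qseq V (m+1)]). \<exists>e\<in>snd (((Gs @ [Qseq V (m+1)])!i) n). \<forall>v\<in>e. f v = i))"
      unfolding h0 V0 length_append length_replicate using eqn[OF n] by simp
  qed
  have ub: "vdW (Gs @ [Qseq V (m+1)]) \<le> max (Mfun V (s * real m)) (cr Gs (1 - 1/s))"
  proof (cases "Mfun V (s * real m) = \<infinity> \<or> cr Gs (1 - 1/s) = \<infinity>")
    case True then show ?thesis by auto
  next
    case False
    then obtain n1 n2 where n1: "Mfun V (s * real m) = enat n1" and n2: "cr Gs (1 - 1/s) = enat n2"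
      by auto
    have m1: "n1 \<ge> 1" "real (card (V n1)) > s * real m"
      using enat_Inf_mem[OF n1[unfolded Mfun_def]] by auto
    have m2: "n2 \<ge> 1" and crc: "\<forall>n'\<ge>n2. \<forall>S :: nat \<Rightarrow> 'a set.
         (\<forall>i<?l. S i \<subseteq> fst ((Gs!i) n') \<and> independent ((Gs!i) n') (S i))
         \<and> (\<forall>i<?l. \<forall>j<?l. i \<noteq> j \<longrightarrow> S i \<inter> S j = {})
         \<longrightarrow> real (\<Sum>i<?l. card (S i)) / real (card (fst ((Gs!0) n'))) < 1 - 1/s"
      using enat_Inf_mem[OF n2[unfolded cr_def]] by auto
    define n where "n = max n1 n2"
    have n: "n \<ge> 1" "n \<ge> n1" "n \<ge> n2" using m1 m2 n_def by auto
    have "card (V n1) \<le> card (V n)" using monoV[OF m1(1) n(2)] fin[OF n(1)] card_mono by blast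
    then have big: "real (card (V n)) > s * real m" using m1(2) by linarith
    have P: "\<forall>f::'a\<Rightarrow>nat. f ` V n \<subseteq> {..<?l+1} \<longrightarrow> (\<exists>i<?l+1. \<exists>e\<in>snd(((Gs @ [Qseq V (m+1)])!i) n). \<forall>v\<in>e. f v = i)"
    proof (intro allI impI)
      fix f :: "'a \<Rightarrow> nat" assume f: "f ` V n \<subseteq> {..<?l+1}"
      have vn: "\<forall>i<?l. fst ((Gs!i) n) = V n" using vert n(1) by blast
      have crn: "\<forall>S :: nat \<Rightarrow> 'a set.
         (\<forall>i<?l. S i \<subseteq> fst ((Gs!i) n) \<and> independent ((Gs!i) n) (S i))
         \<and> (\<forall>i<?l. \<forall>j<?l. i \<noteq> j \<longrightarrow> S i \<inter> S j = {})
         \<longrightarrow> real (\<Sum>i<?l. card (S i)) / real (card (fst ((Gs!0) n))) < 1 - 1/s"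
        using crc n(3) by blast
      have Vn: "V n = V n" ..
      show "\<exists>i<?l+1. \<exists>e\<in>snd(((Gs @ [Qseq V (m+1)])!i) n). \<forall>v\<in>e. f v = i"
        by (rule UB[where W=V, OF assms(1) V0[of n] Vn vn fin[OF n(1)] big assms(4) crn f])
    qed
    have "enat n \<in> {enat n | n. n \<ge> 1 \<and>
      (\<forall>f :: 'a \<Rightarrow> nat. f ` fst (((Gs @ [Qseq V (m+1)])!0) n) \<subseteq> {..<length (Gs @ [Qseq V (m+1)])} \<longrightarrow>
         (\<exists>i<length (Gs @ [Qseq V (m+1)]). \<exists>e\<in>snd (((Gs @ [Qseq V (m+1)])!i) n). \<forall>v\<in>e. f v = i))}"
      using P n(1) h0 V0 by auto
    then have "vdW (Gs @ [Qseq V (m+1)]) \<le> enat n" unfolding vdW_def by (rule Inf_lower)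
    also have "enat n = max (Mfun V (s * real m)) (cr Gs (1 - 1/s))"
      using n1 n2 n_def by simp
    finally show ?thesis .
  qed
  show ?thesis using conjI[OF eq ub] unfolding V_def .
qed

end
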